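(* For every boolean function $f:\{-1,1\}^n\to\{-1,1\}$ and every $\epsilon\in(0,\tfrac12)$, $$\sum_{S\subseteq[n]}|\hat f(S)|^{2(1+\epsilon)}\ge 1-(3\epsilon+2\epsilon^2)I(f)-\sum_{k=1}^n\Big(\Big(\frac{I_k(f)}{4}\Big)^{-\epsilon}-1\Big)I_k(f),$$ where terms with $I_k(f)=0$ in the last sum are interpreted as $0$.
   Context: Let $x$ be uniform on $\{-1,1\}^n$; $\mu_k$ flips the $k$-th coordinate; $I_k(f)=\mathbb{P}_x[f(x)\neq f(\mu_k(x))]$, $I(f)=\sum_k I_k(f)$; $\hat f(S)=\mathbb{E}_x[f(x)\prod_{k\in S}x_k]$ for $S\subseteq[n]$. *)

theory Defs
  imports "HOL-Analysis.Analysis" "HOL-Library.FuncSet"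
begin

text \<open>The Boolean cube {-1,1}^n, with coordinates indexed by 0..<n (standing for [n]).
  Points are functions nat => real, extensional (value undefined outside 0..<n).\<close>
definition cube :: "nat \<Rightarrow> (nat \<Rightarrow> real) set" where
  "cube n = PiE {0..<n} (\<lambda>_. {-1, 1})"

definition cube_exp :: "nat \<Rightarrow> ((nat \<Rightarrow> real) \<Rightarrow> real) \<Rightarrow> real" where
  "cube_exp n g = (\<Sum>x\<in>cube n. g x) / real (card (cube n))"

definition cube_prob :: "nat \<Rightarrow> ((nat \<Rightarrow> real) \<Rightarrow> bool) \<Rightarrow> real" where
  "cube_prob n P = real (card {x\<in>cube n. P x}) / real (card (cube n))"

definition flip :: "nat \<Rightarrow> (nat \<Rightarrow> real) \<Rightarrow> (nat \<Rightarrow> real)" where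
  "flip k x = x(k := - x k)"

definition boolean_fun :: "nat \<Rightarrow> ((nat \<Rightarrow> real) \<Rightarrow> real) \<Rightarrow> bool" where
  "boolean_fun n f \<longleftrightarrow> (\<forall>x\<in>cube n. f x \<in> {-1, 1})"

definition influence :: "nat \<Rightarrow> ((nat \<Rightarrow> real) \<Rightarrow> real) \<Rightarrow> nat \<Rightarrow> real" where
  "influence n f k = cube_prob n (\<lambda>x. f x \<noteq> f (flip k x))"

definition total_influence :: "nat \<Rightarrow> ((nat \<Rightarrow> real) \<Rightarrow> real) \<Rightarrow> real" where
  "total_influence n f = (\<Sum>k<n. influence n f k)"

definition fourier_coeff :: "nat \<Rightarrow> ((nat \<Rightarrow> real) \<Rightarrow> real) \<Rightarrow> nat set \<Rightarrow> real" where
  "fourier_coeff n f S = cube_exp n (\<lambda>x. f x * (\<Prod>k\<in>S. x k))"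

end

theory Submission
  imports Defs
begin


lemma ln4_ge1: "1 \<le> ln (4::real)"
proof -
  have "exp 1 \<le> (4::real)" using exp_le by linarith
  then have "ln (exp 1) \<le> ln (4::real)" by (subst ln_le_cancel_iff) auto
  then show ?thesis by simp
qed

lemma powr_lb:
  fixes w e :: real assumes "0 \<le> w" "0 < e"
  shows "w + e * w * ln w \<le> w powr (1 + e)"
proof (cases "w = 0")
  case True then show ?thesis by simp
next
  case False
  then have wp: "w > 0" using assms by simp
  have a: "w powr (1+e) = w powr 1 * w powr e" by (simp add: powr_add)
  have b: "w powr e = exp (e * ln w)" using wp by (simp add: powr_def)
  have "w powr (1+e) = w * exp (e * ln w)" using a b wp by simp
  moreover have "1 + e * ln w \<le> exp (e * ln w)" by (rule exp_ge_add_one_self)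
  moreover have "w * (1 + e * ln w) \<le> w * exp (e * ln w)"
    using wp \<open>1 + e * ln w \<le> exp (e * ln w)\<close> by (intro mult_left_mono) auto
  ultimately show ?thesis by (simp add: algebra_simps)
qed

lemma perk:
  fixes p e :: real assumes "0 \<le> p" "p \<le> 1" "0 < e"
  shows "e * (p * ln p + (1 - p) * ln (1 - p)) \<ge>
     - (3 * e + 2 * e^2) * p - (if p = 0 then 0 else ((p / 4) powr (- e) - 1) * p)"
proof (cases "p = 0")
  case True then show ?thesis by simp
next
  case False
  then have pp: "p > 0" using assms by simp
  have h1: "(1 - p) * ln (1 - p) \<ge> - p"
  proof (cases "p = 1")
    case True then show ?thesis by simp
  next
    case False
    then have q: "1 - p > 0" using assms by simp
    have "ln (1/(1-p)) \<le> 1/(1-p) - 1" using q by (intro ln_le_minus_one) simp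
    then have "- ln (1-p) \<le> p/(1-p)" using q by (simp add: ln_div field_simps)
    then have "(1-p) * (- ln (1-p)) \<le> p" using q by (simp add: field_simps)
    then show ?thesis by simp
  qed
  have "(p/4) powr (-e) = exp (- e * ln (p/4))" using pp by (simp add: powr_def)
  also have "\<dots> \<ge> 1 + (- e * ln (p/4))" by (rule exp_ge_add_one_self)
  finally have h2: "(p/4) powr (-e) - 1 \<ge> e * (ln 4 - ln p)" using pp by (simp add: ln_div algebra_simps)
  have "e * (ln 4 - ln p) \<ge> e * (1 - ln p)" using ln4_ge1 assms by (simp add: mult_left_mono)
  with h2 have h3: "((p/4) powr (-e) - 1) * p \<ge> e * (1 - ln p) * p" using pp
    by (meson dual_order.trans less_imp_le mult_right_mono)
  have h4: "e * ((1 - p) * ln (1 - p)) \<ge> - e * p" using mult_left_mono[OF h1, of e] assms by simp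
  have "0 \<le> (3 * e + 2 * e^2) * p" using assms by simp
  moreover have "e * (p * ln p + (1 - p) * ln (1 - p)) = e * p * ln p + e * ((1 - p) * ln (1 - p))"
    by (simp add: algebra_simps)
  moreover have "e * (1 - ln p) * p = e * p - e * p * ln p" by (simp add: algebra_simps)
  ultimately show ?thesis using h3 h4 unfolding if_not_P[OF False] by linarith
qed

lemma entropy_sub:
  fixes A :: "'a set" and w :: "'a set \<Rightarrow> real" and p :: "'a \<Rightarrow> real"
  assumes fin: "finite A" and nn: "\<And>S. S \<in> Pow A \<Longrightarrow> 0 \<le> w S"
    and tot: "(\<Sum>S\<in>Pow A. w S) = 1"
    and pdef: "\<And>k. k \<in> A \<Longrightarrow> p k = (\<Sum>S\<in>Pow A. if k \<in> S then w S else 0)"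
  shows "(\<Sum>k\<in>A. p k * ln (p k) + (1 - p k) * ln (1 - p k)) \<le> (\<Sum>S\<in>Pow A. w S * ln (w S))"
proof -
  have finP: "finite (Pow A)" using fin by simp
  have compl: "1 - p k = (\<Sum>S\<in>Pow A. if k \<in> S then 0 else w S)" if "k \<in> A" for k
  proof -
    have "(\<Sum>S\<in>Pow A. if k \<in> S then w S else 0) + (\<Sum>S\<in>Pow A. if k \<in> S then 0 else w S)
        = (\<Sum>S\<in>Pow A. w S)" by (subst sum.distrib[symmetric]) (rule sum.cong, auto)
    then show ?thesis using tot pdef[OF that] by simp
  qed
  have pge: "w S \<le> p k" if "S \<in> Pow A" "k \<in> S" for S k
  proof -
    have "k \<in> A" using that by auto
    have "w S = (if k \<in> S then w S else 0)" using that by simp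
    also have "\<dots> \<le> (\<Sum>S\<in>Pow A. if k \<in> S then w S else 0)"
      by (rule member_le_sum[OF that(1)]) (use nn fin in auto)
    finally show ?thesis using pdef[OF \<open>k \<in> A\<close>] by simp
  qed
  have cge: "w S \<le> 1 - p k" if "S \<in> Pow A" "k \<in> A" "k \<notin> S" for S k
  proof -
    have "w S = (if k \<in> S then 0 else w S)" using that by simp
    also have "\<dots> \<le> (\<Sum>S\<in>Pow A. if k \<in> S then 0 else w S)"
      by (rule member_le_sum[OF that(1)]) (use nn fin in auto)
    finally show ?thesis using compl[OF that(2)] by simp
  qed
  have p0: "0 \<le> p k" if "k \<in> A" for k
    using pdef[OF that] nn by (auto intro!: sum_nonneg)
  have p1: "0 \<le> 1 - p k" if "k \<in> A" for k
    using compl[OF that] nn by (auto intro!: sum_nonneg)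
  define r where "r S k = (if k \<in> S then p k else 1 - p k)" for S k
  define q where "q S = (\<Prod>k\<in>A. r S k)" for S
  define L where "L S = (\<Sum>k\<in>A. ln (r S k))" for S
  have qsum: "(\<Sum>S\<in>Pow A. q S) = 1"
  proof -
    have "(\<Prod>k\<in>A. p k + (1 - p k)) = (\<Sum>X\<in>Pow A. (\<Prod>k\<in>X. p k) * (\<Prod>k\<in>A-X. 1 - p k))"
      by (rule prod_add[OF fin])
    also have "\<dots> = (\<Sum>S\<in>Pow A. q S)"
    proof (rule sum.cong[OF refl])
      fix S assume S: "S \<in> Pow A"
      have "q S = (\<Prod>k\<in>S. r S k) * (\<Prod>k\<in>A-S. r S k)"
        unfolding q_def using S fin prod.subset_diff[of S A "r S"] by (simp add: mult.commute)
      also have "(\<Prod>k\<in>S. r S k) = (\<Prod>k\<in>S. p k)"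
        by (rule prod.cong) (auto simp: r_def)
      also have "(\<Prod>k\<in>A-S. r S k) = (\<Prod>k\<in>A-S. 1 - p k)"
        by (rule prod.cong) (auto simp: r_def)
      finally show "(\<Prod>k\<in>S. p k) * (\<Prod>k\<in>A-S. 1 - p k) = q S" by simp
    qed
    finally show ?thesis by simp
  qed
  have key: "w S * ln (w S) \<ge> w S * L S + w S - q S" if S: "S \<in> Pow A" for S
  proof (cases "w S = 0")
    case True
    have "0 \<le> r S k" if "k \<in> A" for k
      unfolding r_def using p0[OF that] p1[OF that] by simp
    then have "0 \<le> q S" unfolding q_def by (intro prod_nonneg) blast
    then show ?thesis using True by simp
  next
    case False
    then have wp: "w S > 0" using nn[OF S] by simp
    have rp: "r S k > 0" if "k \<in> A" for k
    proof (cases "k \<in> S")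
      case True
      then show ?thesis using pge[OF S True] wp unfolding r_def by simp
    next
      case False
      then show ?thesis using cge[OF S that False] wp unfolding r_def by simp
    qed
    have qp: "q S > 0" unfolding q_def using rp by (intro prod_pos) blast
    have lq: "ln (q S) = L S" unfolding q_def L_def by (intro ln_prod fin) (use rp in force)
    have "ln (q S / w S) \<le> q S / w S - 1" using qp wp by (intro ln_le_minus_one) simp
    then have "ln (q S) - ln (w S) \<le> q S / w S - 1" using qp wp by (simp add: ln_div)
    then have "w S * (ln (q S) - ln (w S)) \<le> w S * (q S / w S - 1)"
      using wp by (simp add: mult_left_mono)
    moreover have "w S * (q S / w S - 1) = q S - w S" using wp by (simp add: field_simps)
    ultimately show ?thesis using lq by (simp add: algebra_simps)
  qed
  have "(\<Sum>S\<in>Pow A. w S * L S + w S - q S) \<le> (\<Sum>S\<in>Pow A. w S * ln (w S))"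
    by (rule sum_mono) (rule key)
  moreover have "(\<Sum>S\<in>Pow A. w S * L S + w S - q S) = (\<Sum>S\<in>Pow A. w S * L S)"
  proof -
    have "(\<Sum>S\<in>Pow A. w S * L S + w S - q S) = (\<Sum>S\<in>Pow A. w S * L S) + (\<Sum>S\<in>Pow A. w S) - (\<Sum>S\<in>Pow A. q S)"
      by (simp only: sum_subtractf sum.distrib)
    then show ?thesis using tot qsum by linarith
  qed
  moreover have "(\<Sum>S\<in>Pow A. w S * L S) = (\<Sum>k\<in>A. p k * ln (p k) + (1 - p k) * ln (1 - p k))"
  proof -
    have "(\<Sum>S\<in>Pow A. w S * L S) = (\<Sum>k\<in>A. \<Sum>S\<in>Pow A. w S * ln (r S k))"
      unfolding L_def sum_distrib_left by (rule sum.swap)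
    also have "\<dots> = (\<Sum>k\<in>A. p k * ln (p k) + (1 - p k) * ln (1 - p k))"
    proof (rule sum.cong[OF refl])
      fix k assume k: "k \<in> A"
      have "(\<Sum>S\<in>Pow A. w S * ln (r S k)) = (\<Sum>S\<in>Pow A. (if k \<in> S then w S else 0) * ln (p k)
              + (if k \<in> S then 0 else w S) * ln (1 - p k))"
        by (rule sum.cong) (auto simp: r_def)
      also have "\<dots> = p k * ln (p k) + (1 - p k) * ln (1 - p k)"
        unfolding sum.distrib sum_distrib_right[symmetric] compl[OF k, symmetric] pdef[OF k, symmetric] by (rule refl)
      finally show "(\<Sum>S\<in>Pow A. w S * ln (r S k)) = p k * ln (p k) + (1 - p k) * ln (1 - p k)" .
    qed
    finally show ?thesis .
  qed
  ultimately show ?thesis by linarith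
qed



lemma finite_cube: "finite (cube n)" by (simp add: cube_def finite_PiE)

lemma card_cube: "card (cube n) = 2^n"
proof -
  have "card (cube n) = (\<Prod>i\<in>{0..<n}. card {-1, 1::real})"
    unfolding cube_def by (simp add: card_PiE)
  also have "card {-1, 1::real} = 2" by simp
  finally show ?thesis by simp
qed

lemma cube_val: "x \<in> cube n \<Longrightarrow> k < n \<Longrightarrow> x k = -1 \<or> x k = 1"
  unfolding cube_def by (auto simp: PiE_iff)

lemma orth:
  assumes x: "x \<in> cube n" and y: "y \<in> cube n"
  shows "(\<Sum>S\<in>Pow {0..<n}. (\<Prod>k\<in>S. x k) * (\<Prod>k\<in>S. y k)) = (if x = y then 2^n else 0)"
proof -
  have "(\<Sum>S\<in>Pow {0..<n}. (\<Prod>k\<in>S. x k) * (\<Prod>k\<in>S. y k))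
      = (\<Sum>S\<in>Pow {0..<n}. (\<Prod>k\<in>S. x k * y k) * (\<Prod>k\<in>{0..<n}-S. 1))"
    by (simp add: prod.distrib)
  also have "\<dots> = (\<Prod>k\<in>{0..<n}. x k * y k + 1)"
    by (rule prod_add[symmetric]) simp
  finally have eq: "(\<Sum>S\<in>Pow {0..<n}. (\<Prod>k\<in>S. x k) * (\<Prod>k\<in>S. y k)) = (\<Prod>k\<in>{0..<n}. x k * y k + 1)" .
  show ?thesis
  proof (cases "x = y")
    case True
    have "(\<Prod>k\<in>{0..<n}. x k * y k + 1) = (\<Prod>k\<in>{0..<n}. 2)"
    proof (rule prod.cong[OF refl])
      fix k assume "k \<in> {0..<n}"
      then have "x k = -1 \<or> x k = 1" using cube_val[OF x] by simp
      then show "x k * y k + 1 = 2" using True by auto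
    qed
    then show ?thesis using eq True by simp
  next
    case False
    have "\<exists>k\<in>{0..<n}. x k \<noteq> y k"
    proof (rule ccontr)
      assume "\<not> ?thesis"
      then have "x = y" using x y unfolding cube_def by (intro PiE_ext) auto
      with False show False by simp
    qed
    then obtain k where k: "k \<in> {0..<n}" "x k \<noteq> y k" by blast
    have "x k = -1 \<or> x k = 1" "y k = -1 \<or> y k = 1" using cube_val[OF x] cube_val[OF y] k by auto
    then have "x k * y k + 1 = 0" using k by auto
    then have "(\<Prod>k\<in>{0..<n}. x k * y k + 1) = 0" using k by (intro prod_zero) auto
    then show ?thesis using eq False by simp
  qed
qed

lemma parseval:
  fixes g :: "(nat \<Rightarrow> real) \<Rightarrow> real"
  shows "(\<Sum>S\<in>Pow {0..<n}. (fourier_coeff n g S)^2) = cube_exp n (\<lambda>x. (g x)^2)"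
proof -
  define C where "C = cube n"
  define N where "N = real (card C)"
  have N: "N = 2^n" unfolding N_def C_def by (simp add: card_cube)
  have finC: "finite C" unfolding C_def by (rule finite_cube)
  define a where "a S = (\<Sum>x\<in>C. g x * (\<Prod>k\<in>S. x k))" for S
  have fc: "fourier_coeff n g S = a S / N" for S
    unfolding fourier_coeff_def cube_exp_def a_def N_def C_def by simp
  have "(\<Sum>S\<in>Pow {0..<n}. (fourier_coeff n g S)^2) = (\<Sum>S\<in>Pow {0..<n}. a S * a S) / N^2"
    unfolding fc by (simp add: power2_eq_square sum_divide_distrib)
  also have "(\<Sum>S\<in>Pow {0..<n}. a S * a S)
      = (\<Sum>S\<in>Pow {0..<n}. \<Sum>x\<in>C. \<Sum>y\<in>C. g x * g y * ((\<Prod>k\<in>S. x k) * (\<Prod>k\<in>S. y k)))"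
    unfolding a_def sum_product by (intro sum.cong refl) (simp add: mult_ac)
  also have "\<dots> = (\<Sum>x\<in>C. \<Sum>S\<in>Pow {0..<n}. \<Sum>y\<in>C. g x * g y * ((\<Prod>k\<in>S. x k) * (\<Prod>k\<in>S. y k)))"
    by (rule sum.swap)
  also have "\<dots> = (\<Sum>x\<in>C. \<Sum>y\<in>C. \<Sum>S\<in>Pow {0..<n}. g x * g y * ((\<Prod>k\<in>S. x k) * (\<Prod>k\<in>S. y k)))"
    by (intro sum.cong refl sum.swap)
  also have "\<dots> = (\<Sum>x\<in>C. \<Sum>y\<in>C. g x * g y * (if x = y then N else 0))"
  proof (intro sum.cong refl)
    fix x y assume "x \<in> C" "y \<in> C"
    then show "(\<Sum>S\<in>Pow {0..<n}. g x * g y * ((\<Prod>k\<in>S. x k) * (\<Prod>k\<in>S. y k))) = g x * g y * (if x = y then N else 0)"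
      unfolding sum_distrib_left[symmetric] using orth[of x n y] N C_def by simp
  qed
  also have "\<dots> = (\<Sum>x\<in>C. g x * g x * N)"
  proof (intro sum.cong refl)
    fix x assume "x \<in> C"
    have "(\<Sum>y\<in>C. g x * g y * (if x = y then N else 0)) = (\<Sum>y\<in>C. if x = y then g x * g y * N else 0)"
      by (intro sum.cong refl) simp
    also have "\<dots> = g x * g x * N" using \<open>x \<in> C\<close> finC by (simp add: sum.delta)
    finally show "(\<Sum>y\<in>C. g x * g y * (if x = y then N else 0)) = g x * g x * N" .
  qed
  finally have "(\<Sum>S\<in>Pow {0..<n}. (fourier_coeff n g S)^2) = (\<Sum>x\<in>C. g x * g x) * N / N^2"
    by (simp add: sum_distrib_right)
  also have "\<dots> = (\<Sum>x\<in>C. (g x)^2) / N" using N by (simp add: power2_eq_square)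
  finally show ?thesis unfolding cube_exp_def N_def C_def .
qed



lemma flip_cube: "x \<in> cube n \<Longrightarrow> k < n \<Longrightarrow> flip k x \<in> cube n"
  unfolding cube_def flip_def by (auto simp: PiE_iff extensional_def)

lemma flip_flip: "flip k (flip k x) = x"
  unfolding flip_def by simp

lemma chi_flip:
  assumes "finite S"
  shows "(\<Prod>j\<in>S. flip k x j) = (if k \<in> S then - (\<Prod>j\<in>S. x j) else (\<Prod>j\<in>S. x j))"
proof (cases "k \<in> S")
  case True
  have "(\<Prod>j\<in>S. flip k x j) = flip k x k * (\<Prod>j\<in>S - {k}. flip k x j)"
    using True assms by (simp add: prod.remove)
  also have "(\<Prod>j\<in>S - {k}. flip k x j) = (\<Prod>j\<in>S - {k}. x j)"
    by (rule prod.cong) (auto simp: flip_def)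
  also have "flip k x k = - x k" by (simp add: flip_def)
  also have "- x k * (\<Prod>j\<in>S - {k}. x j) = - (\<Prod>j\<in>S. x j)"
    using True assms by (simp add: prod.remove)
  finally show ?thesis using True by simp
next
  case False
  have "(\<Prod>j\<in>S. flip k x j) = (\<Prod>j\<in>S. x j)"
    by (rule prod.cong) (use False in \<open>auto simp: flip_def\<close>)
  then show ?thesis using False by simp
qed

lemma sum_flip:
  assumes "k < n"
  shows "(\<Sum>x\<in>cube n. h (flip k x)) = (\<Sum>x\<in>cube n. h x)"
  by (rule sum.reindex_bij_witness[of _ "flip k" "flip k"])
     (use assms in \<open>auto simp: flip_flip flip_cube\<close>)

lemma influence_fourier:
  assumes bf: "boolean_fun n f" and k: "k < n"
  shows "influence n f k = (\<Sum>S\<in>Pow {0..<n}. if k \<in> S then (fourier_coeff n f S)^2 else 0)"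
proof -
  define D where "D x = (f x - f (flip k x)) / 2" for x
  have fv: "f x = -1 \<or> f x = 1" if "x \<in> cube n" for x
    using bf that unfolding boolean_fun_def by auto
  have Dsq: "(D x)^2 = (if f x \<noteq> f (flip k x) then 1 else 0)" if "x \<in> cube n" for x
    using fv[OF that] fv[OF flip_cube[OF that k]] unfolding D_def by auto
  have "cube_exp n (\<lambda>x. (D x)^2) = influence n f k"
  proof -
    have "(\<Sum>x\<in>cube n. (D x)^2) = (\<Sum>x\<in>cube n. if f x \<noteq> f (flip k x) then 1 else 0)"
      by (rule sum.cong) (simp_all add: Dsq)
    also have "\<dots> = (\<Sum>x\<in>{x\<in>cube n. f x \<noteq> f (flip k x)}. 1)"
      by (rule sum.inter_filter[symmetric]) (rule finite_cube)
    also have "\<dots> = real (card {x\<in>cube n. f x \<noteq> f (flip k x)})" by simp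
    finally show ?thesis unfolding cube_exp_def influence_def cube_prob_def by simp
  qed
  moreover have "fourier_coeff n D S = (if k \<in> S then fourier_coeff n f S else 0)"
    if S: "S \<in> Pow {0..<n}" for S
  proof -
    have finS: "finite S" using S finite_subset by auto
    have "(\<Sum>x\<in>cube n. f (flip k x) * (\<Prod>j\<in>S. x j))
        = (\<Sum>x\<in>cube n. f (flip k x) * (\<Prod>j\<in>S. flip k (flip k x) j))"
      by (simp add: flip_flip)
    also have "\<dots> = (\<Sum>x\<in>cube n. f x * (\<Prod>j\<in>S. flip k x j))"
      by (rule sum_flip[OF k, of "\<lambda>y. f y * (\<Prod>j\<in>S. flip k y j)"])
    also have "\<dots> = (\<Sum>x\<in>cube n. if k \<in> S then - (f x * (\<Prod>j\<in>S. x j)) else f x * (\<Prod>j\<in>S. x j))"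
      by (rule sum.cong) (simp_all add: chi_flip[OF finS])
    finally have eq: "(\<Sum>x\<in>cube n. f (flip k x) * (\<Prod>j\<in>S. x j))
        = (if k \<in> S then - (\<Sum>x\<in>cube n. f x * (\<Prod>j\<in>S. x j)) else (\<Sum>x\<in>cube n. f x * (\<Prod>j\<in>S. x j)))"
      by (simp add: sum_negf)
    have "(\<Sum>x\<in>cube n. D x * (\<Prod>j\<in>S. x j))
       = ((\<Sum>x\<in>cube n. f x * (\<Prod>j\<in>S. x j)) - (\<Sum>x\<in>cube n. f (flip k x) * (\<Prod>j\<in>S. x j))) / 2"
      unfolding D_def by (simp add: sum_subtractf[symmetric] sum_divide_distrib[symmetric] left_diff_distrib)
    then show ?thesis unfolding fourier_coeff_def cube_exp_def using eq by auto
  qed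
  ultimately have "influence n f k = (\<Sum>S\<in>Pow {0..<n}. (fourier_coeff n D S)^2)"
    using parseval[of n D] by simp
  also have "\<dots> = (\<Sum>S\<in>Pow {0..<n}. if k \<in> S then (fourier_coeff n f S)^2 else 0)"
    by (rule sum.cong) (auto simp: \<open>\<And>S. S \<in> Pow {0..<n} \<Longrightarrow> fourier_coeff n D S = _\<close>)
  finally show ?thesis .
qed

lemma fourier_total:
  assumes bf: "boolean_fun n f"
  shows "(\<Sum>S\<in>Pow {0..<n}. (fourier_coeff n f S)^2) = 1"
proof -
  have "(\<Sum>x\<in>cube n. (f x)^2) = (\<Sum>x\<in>cube n. 1)"
    by (rule sum.cong) (use bf in \<open>auto simp: boolean_fun_def\<close>)
  then have "cube_exp n (\<lambda>x. (f x)^2) = 1" unfolding cube_exp_def using card_cube[of n] by simp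
  then show ?thesis using parseval[of n f] by simp
qed



lemma abs_powr_sq:
  fixes c e :: real assumes "0 < e"
  shows "\<bar>c\<bar> powr (2 * (1 + e)) = (c^2) powr (1 + e)"
proof (cases "c = 0")
  case True then show ?thesis by simp
next
  case False
  then have "\<bar>c\<bar> > 0" by simp
  have "\<bar>c\<bar> powr (2 * (1 + e)) = (\<bar>c\<bar> powr 2) powr (1 + e)" by (rule powr_powr[symmetric])
  also have "\<bar>c\<bar> powr 2 = \<bar>c\<bar>^2" using \<open>\<bar>c\<bar> > 0\<close> by (simp add: powr_numeral)
  also have "\<bar>c\<bar>^2 = c^2" by simp
  finally show ?thesis .
qed

theorem mainTheorem9:
  fixes n :: nat and f :: "(nat \<Rightarrow> real) \<Rightarrow> real" and \<epsilon> :: real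
  assumes "boolean_fun n f"
    and "0 < \<epsilon>" and "\<epsilon> < 1/2"
  shows "(\<Sum>S\<in>Pow {0..<n}. \<bar>fourier_coeff n f S\<bar> powr (2 * (1 + \<epsilon>)))
          \<ge> 1 - (3 * \<epsilon> + 2 * \<epsilon>^2) * total_influence n f
              - (\<Sum>k<n. if influence n f k = 0 then 0
                         else ((influence n f k / 4) powr (- \<epsilon>) - 1) * influence n f k)"
proof -
  define w where "w S = (fourier_coeff n f S)^2" for S
  define p where "p k = influence n f k" for k
  have tot: "(\<Sum>S\<in>Pow {0..<n}. w S) = 1" unfolding w_def by (rule fourier_total[OF assms(1)])
  have pdef: "p k = (\<Sum>S\<in>Pow {0..<n}. if k \<in> S then w S else 0)" if "k \<in> {0..<n}" for k
    unfolding p_def w_def using influence_fourier[OF assms(1)] that by simp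
  have ent: "(\<Sum>k\<in>{0..<n}. p k * ln (p k) + (1 - p k) * ln (1 - p k)) \<le> (\<Sum>S\<in>Pow {0..<n}. w S * ln (w S))"
    by (rule entropy_sub[OF _ _ tot pdef]) (auto simp: w_def)
  have p01: "0 \<le> p k \<and> p k \<le> 1" if "k \<in> {0..<n}" for k
  proof
    show "0 \<le> p k" unfolding pdef[OF that] by (rule sum_nonneg) (simp add: w_def)
    have "p k \<le> (\<Sum>S\<in>Pow {0..<n}. w S)" unfolding pdef[OF that]
      by (rule sum_mono) (simp add: w_def)
    then show "p k \<le> 1" using tot by simp
  qed
  have "(\<Sum>S\<in>Pow {0..<n}. \<bar>fourier_coeff n f S\<bar> powr (2 * (1 + \<epsilon>)))
      = (\<Sum>S\<in>Pow {0..<n}. (w S) powr (1 + \<epsilon>))"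
    unfolding w_def using abs_powr_sq[OF assms(2)] by simp
  also have "\<dots> \<ge> (\<Sum>S\<in>Pow {0..<n}. w S + \<epsilon> * w S * ln (w S))"
    by (rule sum_mono) (rule powr_lb, simp add: w_def, rule assms(2))
  finally have L1: "(\<Sum>S\<in>Pow {0..<n}. \<bar>fourier_coeff n f S\<bar> powr (2 * (1 + \<epsilon>)))
     \<ge> 1 + \<epsilon> * (\<Sum>S\<in>Pow {0..<n}. w S * ln (w S))"
    using tot by (simp add: sum.distrib sum_distrib_left mult.assoc)
  have L2: "\<epsilon> * (\<Sum>S\<in>Pow {0..<n}. w S * ln (w S))
      \<ge> (\<Sum>k\<in>{0..<n}. \<epsilon> * (p k * ln (p k) + (1 - p k) * ln (1 - p k)))"
    using mult_left_mono[OF ent, of \<epsilon>] assms(2) by (simp add: sum_distrib_left)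
  have L3: "(\<Sum>k\<in>{0..<n}. \<epsilon> * (p k * ln (p k) + (1 - p k) * ln (1 - p k)))
     \<ge> (\<Sum>k\<in>{0..<n}. - (3 * \<epsilon> + 2 * \<epsilon>^2) * p k - (if p k = 0 then 0 else ((p k / 4) powr (- \<epsilon>) - 1) * p k))"
    by (rule sum_mono) (use p01 assms(2) perk in auto)
  have R: "(\<Sum>k\<in>{0..<n}. - (3 * \<epsilon> + 2 * \<epsilon>^2) * p k - (if p k = 0 then 0 else ((p k / 4) powr (- \<epsilon>) - 1) * p k))
     = - (3 * \<epsilon> + 2 * \<epsilon>^2) * total_influence n f
              - (\<Sum>k<n. if influence n f k = 0 then 0
                         else ((influence n f k / 4) powr (- \<epsilon>) - 1) * influence n f k)"
    unfolding total_influence_def p_def sum_subtractf sum_distrib_left[symmetric] lessThan_atLeast0 by simp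
  show ?thesis using L1 L2 L3 R by linarith
qed


end
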